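(* Let $F=F(N,\mathcal D)$ be a connected GSC, $x\in F$, $n\ge1$, and let $\omega,\tau\in\mathcal D^n\setminus\Omega_n(x)$ be well separated by $x$. Then $\varphi_\omega(F)$ and $\varphi_\tau(F)$ lie in different connected components of $F\setminus\{x\}$; in particular $x$ is a cut point of $F$.
   Context: GSC: $N\ge2$, $\mathcal D\subset\{0,\dots,N-1\}^2$ with $1<|\mathcal D|<N^2$, $\varphi_i(x)=\frac1N(x+i)$, $F$ the attractor $F=\bigcup_{i\in\mathcal D}\varphi_i(F)$; $\varphi_{i_1\cdots i_k}=\varphi_{i_1}\circ\cdots\circ\varphi_{i_k}$. For $x\in F$ and $k\ge1$: $\Omega_k(x)=\{\mathbf i\in\mathcal D^k: x\in\varphi_{\mathbf i}(F)\}$ and $E_k(x)=\bigcup_{\mathbf j\in\mathcal D^k\setminus\Omega_k(x)}\varphi_{\mathbf j}(F)$. Two words $\omega,\tau\in\mathcal D^n\setminus\Omega_n(x)$ are well separated by $x$ if for every $p\ge1$ the sets $\varphi_\omega(F)$ and $\varphi_\tau(F)$ lie in different connected components of $E_{n+p}(x)$. *)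

theory Defs
  imports "HOL-Analysis.Analysis"
begin

type_synonym pt = "real \<times> real"

definition gsc_data :: "nat \<Rightarrow> (nat \<times> nat) set \<Rightarrow> bool" where
  "gsc_data N D \<longleftrightarrow> N \<ge> 2 \<and> D \<subseteq> {0..<N} \<times> {0..<N} \<and> 1 < card D \<and> card D < N^2"

definition phi :: "nat \<Rightarrow> nat \<times> nat \<Rightarrow> pt \<Rightarrow> pt" where
  "phi N i p = ((fst p + real (fst i)) / real N, (snd p + real (snd i)) / real N)"

definition phiw :: "nat \<Rightarrow> (nat \<times> nat) list \<Rightarrow> pt \<Rightarrow> pt" where
  "phiw N w = foldr (\<lambda>i f. phi N i \<circ> f) w id"

definition attractor :: "nat \<Rightarrow> (nat \<times> nat) set \<Rightarrow> pt set" where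
  "attractor N D = (THE F. F \<noteq> {} \<and> compact F \<and> F = (\<Union>i\<in>D. phi N i ` F))"

definition words :: "(nat \<times> nat) set \<Rightarrow> nat \<Rightarrow> (nat \<times> nat) list set" where
  "words D k = {w. length w = k \<and> set w \<subseteq> D}"

definition Omega :: "nat \<Rightarrow> (nat \<times> nat) set \<Rightarrow> nat \<Rightarrow> pt \<Rightarrow> (nat \<times> nat) list set" where
  "Omega N D k x = {w \<in> words D k. x \<in> phiw N w ` attractor N D}"

definition Ek :: "nat \<Rightarrow> (nat \<times> nat) set \<Rightarrow> nat \<Rightarrow> pt \<Rightarrow> pt set" where
  "Ek N D k x = (\<Union>w \<in> words D k - Omega N D k x. phiw N w ` attractor N D)"

definition diff_components :: "pt set \<Rightarrow> pt set \<Rightarrow> pt set \<Rightarrow> bool" where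
  "diff_components S A B \<longleftrightarrow> A \<subseteq> S \<and> B \<subseteq> S \<and>
     (\<forall>a\<in>A. \<forall>b\<in>B. connected_component_set S a \<noteq> connected_component_set S b)"

definition well_separated :: "nat \<Rightarrow> (nat \<times> nat) set \<Rightarrow> nat \<Rightarrow> pt \<Rightarrow>
    (nat \<times> nat) list \<Rightarrow> (nat \<times> nat) list \<Rightarrow> bool" where
  "well_separated N D n x \<omega> \<tau> \<longleftrightarrow>
     \<omega> \<in> words D n - Omega N D n x \<and> \<tau> \<in> words D n - Omega N D n x \<and>
     (\<forall>p\<ge>1. diff_components (Ek N D (n + p) x)
              (phiw N \<omega> ` attractor N D) (phiw N \<tau> ` attractor N D))"

definition cut_point :: "pt set \<Rightarrow> pt \<Rightarrow> bool" where
  "cut_point F x \<longleftrightarrow> x \<in> F \<and> \<not> connected (F - {x})"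

end

theory Submission
  imports Defs
begin

lemma phi_alt: "phi N i p = scaleR (1/real N) (p + (real (fst i), real (snd i)))"
  by (cases p) (simp add: phi_def divide_inverse mult.commute)

lemma dist_phi: "N > 0 \<Longrightarrow> dist (phi N i p) (phi N i q) = dist p q / real N"
proof -
  assume "N > 0"
  have "phi N i p - phi N i q = scaleR (1/real N) (p - q)"
    unfolding phi_alt by (simp add: algebra_simps)
  thus ?thesis by (simp add: dist_norm divide_inverse mult.commute)
qed

lemma phiw_Nil[simp]: "phiw N [] = id" by (simp add: phiw_def)
lemma phiw_Cons[simp]: "phiw N (i#w) = phi N i \<circ> phiw N w" by (simp add: phiw_def)
lemma phiw_append: "phiw N (w@v) = phiw N w \<circ> phiw N v"
  by (induction w) auto

lemma dist_phiw: "N > 0 \<Longrightarrow> dist (phiw N w p) (phiw N w q) = dist p q / real N ^ length w"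
  by (induction w) (auto simp: dist_phi)

lemma cont_phi: "continuous_on S (phi N i)"
proof -
  have "phi N i = (\<lambda>p. scaleR (1/real N) (p + (real (fst i), real (snd i))))"
    by (rule ext) (rule phi_alt)
  thus ?thesis by (simp add: continuous_intros)
qed

lemma cont_phiw: "continuous_on S (phiw N w)"
proof (induction w arbitrary: S)
  case Nil thus ?case by (simp add: continuous_on_id)
next
  case (Cons i w)
  show ?case unfolding phiw_Cons
    by (rule continuous_on_compose[OF Cons.IH cont_phi])
qed

lemma words_Suc: "words D (Suc k) = {i#w | i w. i \<in> D \<and> w \<in> words D k}"
  unfolding words_def by (auto simp: length_Suc_conv)

lemma words_0: "words D 0 = {[]}" unfolding words_def by auto

lemma finite_words: "finite D \<Longrightarrow> finite (words D k)"
  unfolding words_def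
  by (rule finite_subset[OF _ finite_lists_length_eq[of D k]]) auto

lemma decomp:
  assumes inv: "F = (\<Union>i\<in>D. phi N i ` F)"
  shows "F = (\<Union>w\<in>words D k. phiw N w ` F)"
proof (induction k)
  case 0 thus ?case by (simp add: words_0)
next
  case (Suc k)
  show ?case
  proof
    show "F \<subseteq> (\<Union>w\<in>words D (Suc k). phiw N w ` F)"
    proof
      fix y assume "y \<in> F"
      then obtain i z where i: "i \<in> D" "z \<in> F" "y = phi N i z" using inv by blast
      then obtain w u where "w \<in> words D k" "u \<in> F" "z = phiw N w u" using Suc by blast
      have "i#w \<in> words D (Suc k)" using i \<open>w \<in> words D k\<close> by (cases i) (auto simp: words_Suc)
      moreover have "y = phiw N (i#w) u" using i \<open>z = phiw N w u\<close> by simp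
      ultimately show "y \<in> (\<Union>w\<in>words D (Suc k). phiw N w ` F)" using \<open>u \<in> F\<close> by blast
    qed
  next
    show "(\<Union>w\<in>words D (Suc k). phiw N w ` F) \<subseteq> F"
    proof
      fix y assume "y \<in> (\<Union>w\<in>words D (Suc k). phiw N w ` F)"
      then obtain i w u where "i \<in> D" "w \<in> words D k" "u \<in> F" "y = phi N i (phiw N w u)"
        by (auto simp: words_Suc)
      moreover have "phiw N w u \<in> F" using Suc \<open>w \<in> words D k\<close> \<open>u \<in> F\<close> by blast
      ultimately show "y \<in> F" using inv by blast
    qed
  qed
qed

lemma cell_sub:
  assumes inv: "F = (\<Union>i\<in>D. phi N i ` F)" and "w \<in> words D k"
  shows "phiw N w ` F \<subseteq> F"
  using decomp[OF inv, of k] assms(2) by blast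

lemma bounded_dist: "bounded (S::'a::real_normed_vector set) \<Longrightarrow> \<exists>B>0. \<forall>p\<in>S. \<forall>q\<in>S. dist p q \<le> B"
proof -
  assume "bounded S"
  then obtain b where b: "b > 0" "\<forall>x\<in>S. norm x \<le> b" by (auto simp: bounded_pos)
  have "\<forall>p\<in>S. \<forall>q\<in>S. dist p q \<le> 2*b"
  proof (intro ballI)
    fix p q assume "p \<in> S" "q \<in> S"
    have "dist p q \<le> norm p + norm q" by (simp add: dist_norm norm_triangle_ineq4)
    moreover have "norm p \<le> b" "norm q \<le> b" using b \<open>p\<in>S\<close> \<open>q\<in>S\<close> by auto
    ultimately show "dist p q \<le> 2*b" by linarith
  qed
  thus ?thesis using b by (intro exI[of _ "2*b"]) auto
qed

lemma small_pow:
  assumes "N \<ge> 2" "B > 0" "d > 0"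
  shows "\<exists>K. \<forall>k\<ge>K. B / real N ^ k < (d::real)"
proof -
  obtain K where K: "(1/real N) ^ K < d / B"
    using real_arch_pow_inv[of "d/B" "1/real N"] assms by auto
  have "B / real N ^ k < d" if "k \<ge> K" for k
  proof -
    have "(1/real N) ^ k \<le> (1/real N) ^ K"
      using assms that by (intro power_decreasing) auto
    hence "(1/real N)^k < d/B" using K by linarith
    hence "B * (1/real N)^k < d" using assms by (simp add: field_simps)
    thus ?thesis by (simp add: power_one_over divide_inverse power_inverse)
  qed
  thus ?thesis by blast
qed

lemma uniq_sub:
  assumes N: "N \<ge> 2"
    and G: "G \<noteq> {}" "compact G" "G = (\<Union>i\<in>D. phi N i ` G)"
    and H: "H \<noteq> {}" "compact H" "H = (\<Union>i\<in>D. phi N i ` H)"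
  shows "G \<subseteq> H"
proof
  fix y assume "y \<in> G"
  obtain h0 where h0: "h0 \<in> H" using H by auto
  have "bounded (G \<union> H)" using G H by (simp add: compact_imp_bounded)
  then obtain B where B: "B > 0" "\<forall>p\<in>G \<union> H. \<forall>q\<in>G \<union> H. dist p q \<le> B"
    using bounded_dist by blast
  have "y \<in> closure H" unfolding closure_approachable
  proof (intro allI impI)
    fix e :: real assume "e > 0"
    then obtain K where K: "\<forall>k\<ge>K. B / real N ^ k < e" using small_pow[OF N B(1)] by blast
    obtain w g where w: "w \<in> words D K" "g \<in> G" "y = phiw N w g"
      using decomp[OF G(3), of K] \<open>y \<in> G\<close> by blast
    have "phiw N w h0 \<in> H" using decomp[OF H(3), of K] w(1) h0 by blast
    moreover have "dist (phiw N w h0) y = dist h0 g / real N ^ K"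
      using w N by (simp add: dist_phiw words_def)
    moreover have "dist h0 g / real N ^ K \<le> B / real N ^ K"
      using B w h0 N by (intro divide_right_mono) auto
    ultimately show "\<exists>y'\<in>H. dist y' y < e" using K by force
  qed
  thus "y \<in> H" using H(2) by (simp add: compact_imp_closed)
qed

lemma phi_box:
  assumes "N \<ge> 2" "i \<in> {0..<N} \<times> {0..<N}" "p \<in> {0..1} \<times> {0..1::real}"
  shows "phi N i p \<in> {0..1} \<times> {0..1}"
proof -
  obtain a b where i: "i = (a,b)" by (cases i)
  obtain u v where p: "p = (u,v)" by (cases p)
  have "real a \<le> real N - 1" "real b \<le> real N - 1" using assms i by auto
  moreover have "u \<le> 1" "v \<le> 1" "0 \<le> u" "0 \<le> v" using assms p by auto
  moreover have "real N > 0" using assms by auto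
  ultimately show ?thesis using i p by (auto simp: phi_def field_simps)
qed

lemma exists_attr:
  assumes "gsc_data N D"
  shows "\<exists>F. F \<noteq> {} \<and> compact F \<and> F = (\<Union>i\<in>D. phi N i ` F)"
proof -
  have N: "N \<ge> 2" and Dsub: "D \<subseteq> {0..<N} \<times> {0..<N}" and cD: "1 < card D"
    using assms by (auto simp: gsc_data_def)
  obtain i0 where i0: "i0 \<in> D" using cD by (metis card.empty ex_in_conv not_one_less_zero)
  obtain a b where ab: "i0 = (a,b)" by (cases i0)
  define z0 where "z0 = (real a / (real N - 1), real b / (real N - 1))"
  have Nr: "real N - 1 > 0" using N by auto
  have fix0: "phi N i0 z0 = z0"
    using Nr N unfolding z0_def phi_def ab by (auto simp: field_simps)
  have abN: "real a \<le> real N - 1" "real b \<le> real N - 1" using Dsub i0 ab by auto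
  have z0box: "z0 \<in> {0..1} \<times> {0..1}" using Nr abN unfolding z0_def by (auto simp: field_simps)
  define P where "P = {phiw N w z0 | w. set w \<subseteq> D}"
  have Pbox: "phiw N w z0 \<in> {0..1} \<times> {0..1}" if "set w \<subseteq> D" for w
    using that
  proof (induction w)
    case Nil thus ?case using z0box by simp
  next
    case (Cons i w) thus ?case using phi_box[OF N, of i] Dsub by auto
  qed
  have Psub: "P \<subseteq> cbox (0,0) (1,1)"
  proof
    fix y assume "y \<in> P"
    then obtain w where "set w \<subseteq> D" "y = phiw N w z0" unfolding P_def by blast
    hence "y \<in> {0..1} \<times> {0..1}" using Pbox by blast
    thus "y \<in> cbox (0,0) (1,1)" unfolding cbox_Pair_eq by simp
  qed
  have Pinv: "P = (\<Union>i\<in>D. phi N i ` P)"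
  proof
    show "P \<subseteq> (\<Union>i\<in>D. phi N i ` P)"
    proof
      fix y assume "y \<in> P"
      then obtain w where w: "set w \<subseteq> D" "y = phiw N w z0" unfolding P_def by blast
      show "y \<in> (\<Union>i\<in>D. phi N i ` P)"
      proof (cases w)
        case Nil
        hence "y = phi N i0 z0" using w fix0 by simp
        moreover have "z0 \<in> P" unfolding P_def by (auto intro!: exI[of _ "[]"])
        ultimately show ?thesis using i0 by blast
      next
        case (Cons i v)
        hence "y = phi N i (phiw N v z0)" "i \<in> D" "set v \<subseteq> D" using w by auto
        moreover have "phiw N v z0 \<in> P" using \<open>set v \<subseteq> D\<close> unfolding P_def by blast
        ultimately show ?thesis by blast
      qed
    qed
  next
    show "(\<Union>i\<in>D. phi N i ` P) \<subseteq> P"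
    proof
      fix y assume "y \<in> (\<Union>i\<in>D. phi N i ` P)"
      then obtain i w where "i \<in> D" "set w \<subseteq> D" "y = phi N i (phiw N w z0)"
        unfolding P_def by blast
      hence "set (i#w) \<subseteq> D" "y = phiw N (i#w) z0" by auto
      thus "y \<in> P" unfolding P_def by blast
    qed
  qed
  have finD: "finite D" using cD by (metis card.infinite not_one_less_zero)
  have bP: "bounded P" using Psub bounded_cbox bounded_subset by blast
  have cP: "compact (closure P)" using bP by (simp add: compact_closure)
  have "closure P = (\<Union>i\<in>D. phi N i ` closure P)"
  proof
    have cU: "compact (\<Union>i\<in>D. phi N i ` closure P)"
      using finD cP by (intro compact_UN compact_continuous_image cont_phi) auto
    have "P \<subseteq> (\<Union>i\<in>D. phi N i ` closure P)"
      using Pinv closure_subset by blast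
    thus "closure P \<subseteq> (\<Union>i\<in>D. phi N i ` closure P)"
      using cU by (simp add: closure_minimal compact_imp_closed)
  next
    have "phi N i ` closure P \<subseteq> closure P" if "i \<in> D" for i
      using that Pinv closure_subset
      by (intro image_closure_subset cont_phi) auto
    thus "(\<Union>i\<in>D. phi N i ` closure P) \<subseteq> closure P" by blast
  qed
  moreover have "z0 \<in> P" unfolding P_def by (auto intro!: exI[of _ "[]"])
  hence "closure P \<noteq> {}" using closure_subset by blast
  ultimately show ?thesis using cP by blast
qed

lemma attr_props:
  assumes "gsc_data N D"
  shows "attractor N D \<noteq> {} \<and> compact (attractor N D) \<and>
         attractor N D = (\<Union>i\<in>D. phi N i ` attractor N D)"
proof -
  have N: "N \<ge> 2" using assms by (simp add: gsc_data_def)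
  obtain F where F: "F \<noteq> {} \<and> compact F \<and> F = (\<Union>i\<in>D. phi N i ` F)"
    using exists_attr[OF assms] by blast
  show ?thesis unfolding attractor_def
  proof (rule theI[of _ F])
    show "F \<noteq> {} \<and> compact F \<and> F = (\<Union>i\<in>D. phi N i ` F)" by (rule F)
  next
    fix G assume G: "G \<noteq> {} \<and> compact G \<and> G = (\<Union>i\<in>D. phi N i ` G)"
    show "G = F" using uniq_sub[OF N] F G by (metis subset_antisym)
  qed
qed

lemma Ek_mono:
  assumes inv: "attractor N D = (\<Union>i\<in>D. phi N i ` attractor N D)" and "k \<le> k'"
  shows "Ek N D k x \<subseteq> Ek N D k' x"
proof
  let ?F = "attractor N D"
  fix y assume "y \<in> Ek N D k x"
  then obtain w where w: "w \<in> words D k" "x \<notin> phiw N w ` ?F" "y \<in> phiw N w ` ?F"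
    unfolding Ek_def Omega_def by blast
  then obtain u where u: "u \<in> ?F" "y = phiw N w u" by blast
  obtain v u' where v: "v \<in> words D (k'-k)" "u' \<in> ?F" "u = phiw N v u'"
    using decomp[OF inv, of "k'-k"] u by blast
  have wv: "w@v \<in> words D k'" using w v assms(2) by (auto simp: words_def)
  have "phiw N (w@v) ` ?F \<subseteq> phiw N w ` ?F"
    using cell_sub[OF inv v(1)] by (auto simp: phiw_append image_comp[symmetric])
  hence "x \<notin> phiw N (w@v) ` ?F" using w by blast
  moreover have "y \<in> phiw N (w@v) ` ?F" using u v by (simp add: phiw_append)
  ultimately show "y \<in> Ek N D k' x" using wv unfolding Ek_def Omega_def by blast
qed

lemma nbhd:
  assumes gsc: "gsc_data N D" and conn: "connected (attractor N D)"
    and y: "y \<in> attractor N D" "y \<noteq> x"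
  shows "\<exists>K. \<forall>k\<ge>K. \<exists>\<delta>>0. \<forall>z\<in>attractor N D. dist y z < \<delta> \<longrightarrow>
            connected_component (Ek N D k x) y z"
proof -
  let ?F = "attractor N D"
  have N: "N \<ge> 2" and cD: "1 < card D" using gsc by (auto simp: gsc_data_def)
  have finD: "finite D" using cD by (metis card.infinite not_one_less_zero)
  have Fp: "?F \<noteq> {}" "compact ?F" and inv: "?F = (\<Union>i\<in>D. phi N i ` ?F)"
    using attr_props[OF gsc] by auto
  obtain B where B: "B > 0" "\<forall>p\<in>?F. \<forall>q\<in>?F. dist p q \<le> B"
    using bounded_dist compact_imp_bounded[OF Fp(2)] by blast
  have d: "dist x y > 0" using y by simp
  obtain K where K: "\<forall>k\<ge>K. B / real N ^ k < dist x y" using small_pow[OF N B(1) d] by blast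
  have "\<exists>\<delta>>0. \<forall>z\<in>?F. dist y z < \<delta> \<longrightarrow> connected_component (Ek N D k x) y z"
    if "k \<ge> K" for k
  proof -
    define T where "T = (\<Union>w\<in>{w \<in> words D k. y \<notin> phiw N w ` ?F}. phiw N w ` ?F)"
    have "compact T" unfolding T_def using finite_words[OF finD, of k] Fp
      by (intro compact_UN compact_continuous_image cont_phiw) auto
    hence "open (- T)" by (simp add: compact_imp_closed open_Compl)
    moreover have "y \<in> - T" unfolding T_def by blast
    ultimately obtain \<delta> where "\<delta> > 0" "ball y \<delta> \<subseteq> - T" using open_contains_ball by blast
    moreover have "connected_component (Ek N D k x) y z" if "z \<in> ?F" "dist y z < \<delta>" for z
    proof -
      obtain w where w: "w \<in> words D k" "z \<in> phiw N w ` ?F"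
        using decomp[OF inv, of k] \<open>z \<in> ?F\<close> by blast
      have "z \<notin> T" using that \<open>ball y \<delta> \<subseteq> - T\<close> by auto
      hence yC: "y \<in> phiw N w ` ?F" using w unfolding T_def by blast
      have xC: "x \<notin> phiw N w ` ?F"
      proof
        assume "x \<in> phiw N w ` ?F"
        then obtain p where p: "p \<in> ?F" "x = phiw N w p" by blast
        obtain q where q: "q \<in> ?F" "y = phiw N w q" using yC by blast
        have "dist x y = dist p q / real N ^ k"
          using p q N w by (simp add: dist_phiw words_def)
        also have "\<dots> \<le> B / real N ^ k" using B p q N by (intro divide_right_mono) auto
        also have "\<dots> < dist x y" using K \<open>k \<ge> K\<close> by blast
        finally show False by simp
      qed
      have sub: "phiw N w ` ?F \<subseteq> Ek N D k x"
        using w xC unfolding Ek_def Omega_def by blast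
      have "connected (phiw N w ` ?F)"
        using conn by (intro connected_continuous_image cont_phiw)
      thus ?thesis unfolding connected_component_def using sub yC w(2) by blast
    qed
    ultimately show ?thesis by (auto simp: dist_commute)
  qed
  thus ?thesis by blast
qed

theorem mainTheorem16:
  fixes N :: nat and D :: "(nat \<times> nat) set" and x :: pt and n :: nat
    and \<omega> \<tau> :: "(nat \<times> nat) list"
  assumes "gsc_data N D"
    and "connected (attractor N D)"
    and "x \<in> attractor N D"
    and "n \<ge> 1"
    and "\<omega> \<in> words D n - Omega N D n x" and "\<tau> \<in> words D n - Omega N D n x"
    and "well_separated N D n x \<omega> \<tau>"
  shows "diff_components (attractor N D - {x})
           (phiw N \<omega> ` attractor N D) (phiw N \<tau> ` attractor N D)
         \<and> cut_point (attractor N D) x"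
proof -
  note gsc = assms(1) and conn = assms(2)
  define F where "F = attractor N D"
  define S where "S = F - {x}"
  define m where "m = n + 1"
  have Fp: "F \<noteq> {}" "compact F" and inv: "F = (\<Union>i\<in>D. phi N i ` F)"
    using attr_props[OF gsc] unfolding F_def by auto
  define R where "R y z \<longleftrightarrow> (\<exists>k\<ge>m. connected_component (Ek N D k x) y z)" for y z
  have Rsym: "R z y" if "R y z" for y z
    using that unfolding R_def by (meson connected_component_sym)
  have Rtrans: "R y u" if h: "R y z" "R z u" for y z u
  proof -
    obtain k1 k2 where k: "k1 \<ge> m" "k2 \<ge> m" "connected_component (Ek N D k1 x) y z"
      "connected_component (Ek N D k2 x) z u" using h unfolding R_def by blast
    have "connected_component (Ek N D (max k1 k2) x) y z"
      using k(3) Ek_mono[OF inv[unfolded F_def], of k1 "max k1 k2"]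
      by (meson connected_component_of_subset max.cobounded1)
    moreover have "connected_component (Ek N D (max k1 k2) x) z u"
      using k(4) Ek_mono[OF inv[unfolded F_def], of k2 "max k1 k2"]
      by (meson connected_component_of_subset max.cobounded2)
    ultimately show ?thesis unfolding R_def using k
      by (meson connected_component_trans le_max_iff_disj)
  qed
  have loc: "\<exists>\<delta>>0. \<forall>z\<in>F. dist y z < \<delta> \<longrightarrow> R y z" if yS: "y \<in> S" for y
  proof -
    obtain K where K: "\<forall>k\<ge>K. \<exists>\<delta>>0. \<forall>z\<in>F. dist y z < \<delta> \<longrightarrow>
            connected_component (Ek N D k x) y z"
      using nbhd[OF gsc conn, of y x] yS unfolding S_def F_def by auto
    then obtain \<delta> where "\<delta> > 0" "\<forall>z\<in>F. dist y z < \<delta> \<longrightarrow>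
            connected_component (Ek N D (max K m) x) y z" by (meson max.cobounded1)
    thus ?thesis unfolding R_def by (meson max.cobounded2)
  qed
  have key: "R a b" if hab: "a \<in> S" "connected_component S a b" for a b
  proof (rule ccontr)
    assume nab: "\<not> R a b"
    obtain T where T: "connected T" "T \<subseteq> S" "a \<in> T" "b \<in> T"
      using hab(2) unfolding connected_component_def by blast
    define A where "A = {z. R a z}"
    have Raa: "R a a" using loc[OF hab(1)] hab(1) unfolding S_def by force
    have o1: "openin (top_of_set T) (T \<inter> A)"
      unfolding openin_euclidean_subtopology_iff
    proof (intro conjI ballI)
      fix z assume z: "z \<in> T \<inter> A"
      then obtain \<delta> where "\<delta> > 0" "\<forall>u\<in>F. dist z u < \<delta> \<longrightarrow> R z u" using loc T by blast
      moreover have "R a u" if "R z u" for u using z that Rtrans unfolding A_def by blast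
      ultimately show "\<exists>e>0. \<forall>x'\<in>T. dist x' z < e \<longrightarrow> x' \<in> T \<inter> A"
        using T(2) unfolding S_def A_def by (metis (no_types, lifting) DiffD1 Int_iff dist_commute
            mem_Collect_eq subset_iff)
    qed auto
    have o2: "openin (top_of_set T) (T - A)"
      unfolding openin_euclidean_subtopology_iff
    proof (intro conjI ballI)
      fix z assume z: "z \<in> T - A"
      then obtain \<delta> where "\<delta> > 0" "\<forall>u\<in>F. dist z u < \<delta> \<longrightarrow> R z u" using loc T by blast
      moreover have "\<not> R a u" if "R z u" for u using z that Rtrans Rsym unfolding A_def by blast
      ultimately show "\<exists>e>0. \<forall>x'\<in>T. dist x' z < e \<longrightarrow> x' \<in> T - A"
        using T(2) unfolding S_def A_def by (metis (no_types, lifting) DiffD1 DiffI dist_commute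
            mem_Collect_eq subset_iff)
    qed auto
    have "T \<inter> A \<noteq> {}" using T Raa unfolding A_def by blast
    moreover have "T - A \<noteq> {}" using T nab unfolding A_def by blast
    ultimately show False using T(1) o1 o2 unfolding connected_openin by blast
  qed
  have wsep: "\<forall>p\<ge>1. diff_components (Ek N D (n + p) x) (phiw N \<omega> ` F) (phiw N \<tau> ` F)"
    using assms(7) unfolding well_separated_def F_def by blast
  have cellS: "phiw N w ` F \<subseteq> S" if "w \<in> words D n - Omega N D n x" for w
    using that cell_sub[OF inv, of w n] unfolding S_def Omega_def F_def by auto
  have dc: "diff_components S (phiw N \<omega> ` F) (phiw N \<tau> ` F)"
    unfolding diff_components_def
  proof (intro conjI ballI)
    show "phiw N \<omega> ` F \<subseteq> S" "phiw N \<tau> ` F \<subseteq> S" using cellS assms(5,6) by auto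
    fix a b assume a: "a \<in> phiw N \<omega> ` F" and b: "b \<in> phiw N \<tau> ` F"
    show "connected_component_set S a \<noteq> connected_component_set S b"
    proof
      assume eq: "connected_component_set S a = connected_component_set S b"
      have bS: "b \<in> S" using b cellS assms(6) by auto
      have aS: "a \<in> S" using a cellS assms(5) by auto
      have "connected_component S a b"
        using eq bS connected_component_refl by (metis mem_Collect_eq)
      then obtain k where k: "k \<ge> m" "connected_component (Ek N D k x) a b"
        using key[OF aS] unfolding R_def by blast
      have "diff_components (Ek N D (n + (k - n)) x) (phiw N \<omega> ` F) (phiw N \<tau> ` F)"
      proof -
        have "k - n \<ge> 1" using k(1) unfolding m_def by simp
        thus ?thesis using wsep by blast
      qed
      hence "diff_components (Ek N D k x) (phiw N \<omega> ` F) (phiw N \<tau> ` F)"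
        using k(1) unfolding m_def by simp
      hence "connected_component_set (Ek N D k x) a \<noteq> connected_component_set (Ek N D k x) b"
        using a b k(1) unfolding diff_components_def m_def by auto
      thus False using k(2) connected_component_eq by blast
    qed
  qed
  have "\<not> connected S"
  proof
    assume cS: "connected S"
    obtain a where a: "a \<in> phiw N \<omega> ` F" using Fp by blast
    obtain b where b: "b \<in> phiw N \<tau> ` F" using Fp by blast
    have "a \<in> S" "b \<in> S" using a b cellS assms(5,6) by auto
    hence "connected_component_set S a = connected_component_set S b"
      using cS by (simp add: connected_component_eq_self)
    thus False using dc a b unfolding diff_components_def by blast
  qed
  thus ?thesis using dc assms(3) unfolding cut_point_def S_def F_def by blast
qed

end
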